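(* Let $m,n\in\mathbb{N}$, $\varepsilon\in\mathbb{R}$, and let $\bar g=-4\,du\,dv+\bar\rho^2\mathring\gamma_{\mathbb{S}^{n-1}}-\tau^2\mathring\gamma_{\mathbb{S}^{m-1}}$ with $\bar\rho=r+2\varepsilon f$. Then, wherever the coordinates are defined and $\bar\rho\ne0$, \[ \bar\square\Big(\frac{f}{\bar\rho}\Big)=-\frac{(n-3)f}{\bar\rho^3}+\frac{(n+m-2)\,r}{2\bar\rho^2}. \]
   Context: On $\mathbb{R}^{m+n}$ with Cartesian coordinates $t\in\mathbb{R}^m$, $x\in\mathbb{R}^n$: $r=|x|$, $\tau=|t|$, $u=\frac12(\tau-r)$, $v=\frac12(\tau+r)$, $f=-uv=\frac14(|x|^2-|t|^2)$. On $\{\tau\ne0,r\ne0\}$ one uses coordinates $(u,v,\omega_x,\omega_t)$ with $\omega_x=x/|x|\in\mathbb{S}^{n-1}$, $\omega_t=t/|t|\in\mathbb{S}^{m-1}$; $\mathring\gamma_{\mathbb{S}^k}$ is the unit round metric. $\bar\square=\bar g^{\alpha\beta}\bar\nabla_{\alpha\beta}$ is the wave operator of $\bar g$. *)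

theory Defs
  imports "HOL-Analysis.Analysis"
begin

text \<open>Points of R^(m+n) are vectors indexed by the finite type 'm + 'n:
  index Inl i is the t-coordinate t_i, index Inr j is the x-coordinate x_j.\<close>

definition tpart :: "real ^ ('m::finite + 'n::finite) \<Rightarrow> real ^ 'm" where
  "tpart p = (\<chi> i. p $ Inl i)"

definition xpart :: "real ^ ('m::finite + 'n::finite) \<Rightarrow> real ^ 'n" where
  "xpart p = (\<chi> j. p $ Inr j)"

definition cr :: "real ^ ('m::finite + 'n::finite) \<Rightarrow> real" where
  "cr p = norm (xpart p)"

definition ctau :: "real ^ ('m::finite + 'n::finite) \<Rightarrow> real" where
  "ctau p = norm (tpart p)"

definition cu :: "real ^ ('m::finite + 'n::finite) \<Rightarrow> real" where
  "cu p = (ctau p - cr p) / 2"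

definition cv :: "real ^ ('m::finite + 'n::finite) \<Rightarrow> real" where
  "cv p = (ctau p + cr p) / 2"

definition cf :: "real ^ ('m::finite + 'n::finite) \<Rightarrow> real" where
  "cf p = - (cu p * cv p)"

definition omx :: "real ^ ('m::finite + 'n::finite) \<Rightarrow> real ^ 'n" where
  "omx p = (1 / cr p) *\<^sub>R xpart p"

definition omt :: "real ^ ('m::finite + 'n::finite) \<Rightarrow> real ^ 'm" where
  "omt p = (1 / ctau p) *\<^sub>R tpart p"

definition crho :: "real \<Rightarrow> real ^ ('m::finite + 'n::finite) \<Rightarrow> real" where
  "crho \<epsilon> p = cr p + 2 * \<epsilon> * cf p"

definition dd :: "('a::real_normed_vector \<Rightarrow> real) \<Rightarrow> 'a \<Rightarrow> 'a \<Rightarrow> real" where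
  "dd F p X = deriv (\<lambda>s. F (p + s *\<^sub>R X)) 0"

definition dvec :: "('a::real_normed_vector \<Rightarrow> 'b::real_normed_vector) \<Rightarrow> 'a \<Rightarrow> 'a \<Rightarrow> 'b" where
  "dvec G p X = vector_derivative (\<lambda>s. G (p + s *\<^sub>R X)) (at 0)"

text \<open>The metric \<open>gbar = -4 du dv + rho_bar^2 \<gamma>_{S^{n-1}} - \<tau>^2 \<gamma>_{S^{m-1}}\<close>
  evaluated on tangent vectors X, Y at p; \<open>du dv\<close> is the symmetric product
  \<open>(du\<otimes>dv + dv\<otimes>du)/2\<close>, and the round metric of the unit sphere is the
  Euclidean inner product of the differentials of \<open>\<omega>_x = x/|x|\<close>, \<open>\<omega>_t = t/|t|\<close>.\<close>
definition gbar :: "real \<Rightarrow> real ^ ('m::finite + 'n::finite) \<Rightarrow>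
    real ^ ('m + 'n) \<Rightarrow> real ^ ('m + 'n) \<Rightarrow> real" where
  "gbar \<epsilon> p X Y =
     - 2 * (dd cu p X * dd cv p Y + dd cu p Y * dd cv p X)
     + (crho \<epsilon> p)\<^sup>2 * (dvec omx p X \<bullet> dvec omx p Y)
     - (ctau p)\<^sup>2 * (dvec omt p X \<bullet> dvec omt p Y)"

definition gmat :: "real \<Rightarrow> real ^ ('m::finite + 'n::finite) \<Rightarrow> real ^ ('m + 'n) ^ ('m + 'n)" where
  "gmat \<epsilon> p = (\<chi> a b. gbar \<epsilon> p (axis a 1) (axis b 1))"

definition pd :: "'i \<Rightarrow> (real ^ 'i::finite \<Rightarrow> real) \<Rightarrow> real ^ 'i \<Rightarrow> real" where
  "pd a F p = dd F p (axis a 1)"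

definition ginv :: "(real ^ 'i::finite \<Rightarrow> real ^ 'i ^ 'i) \<Rightarrow> real ^ 'i \<Rightarrow> real ^ 'i ^ 'i" where
  "ginv G p = matrix_inv (G p)"

definition christ :: "(real ^ 'i::finite \<Rightarrow> real ^ 'i ^ 'i) \<Rightarrow> real ^ 'i \<Rightarrow> 'i \<Rightarrow> 'i \<Rightarrow> 'i \<Rightarrow> real" where
  "christ G p c a b = (1/2) * (\<Sum>d\<in>UNIV. ginv G p $ c $ d *
      (pd a (\<lambda>q. G q $ d $ b) p + pd b (\<lambda>q. G q $ d $ a) p - pd d (\<lambda>q. G q $ a $ b) p))"

definition wave :: "(real ^ 'i::finite \<Rightarrow> real ^ 'i ^ 'i) \<Rightarrow> (real ^ 'i \<Rightarrow> real) \<Rightarrow> real ^ 'i \<Rightarrow> real" where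
  "wave G \<phi> p = (\<Sum>a\<in>UNIV. \<Sum>b\<in>UNIV. ginv G p $ a $ b *
      (pd a (pd b \<phi>) p - (\<Sum>c\<in>UNIV. christ G p c a b * pd c \<phi> p)))"

end

theory Submission
  imports Defs
begin

lemma sum_UNIV_plus:
  "(\<Sum>a\<in>(UNIV::('a::finite + 'b::finite) set). g a) = (\<Sum>i\<in>UNIV. g (Inl i)) + (\<Sum>j\<in>UNIV. g (Inr j))"
  using sum.Plus[of "UNIV::'a set" "UNIV::'b set" g] by (simp add: o_def)

lemma dd_has:
  assumes F: "(F has_derivative F') (at q)" and v: "F' X = v"
  shows "dd F q X = v"
proof -
  have l: "((\<lambda>s::real. q + s *\<^sub>R X) has_derivative (\<lambda>s. s *\<^sub>R X)) (at 0)"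
    by (auto intro!: derivative_eq_intros)
  have F0: "(F has_derivative F') (at ((\<lambda>s::real. q + s *\<^sub>R X) 0))" using F by simp
  have "((\<lambda>s. F (q + s *\<^sub>R X)) has_derivative (\<lambda>s. F' (s *\<^sub>R X))) (at 0)"
    using has_derivative_compose[OF l F0] by simp
  moreover have "(\<lambda>s. F' (s *\<^sub>R X)) = (*) (F' X)"
    using has_derivative_bounded_linear[OF F] by (intro ext) (simp add: bounded_linear.linear linear_scale mult.commute)
  ultimately have "((\<lambda>s. F (q + s *\<^sub>R X)) has_real_derivative F' X) (at 0)"
    by (simp add: has_field_derivative_def)
  then show ?thesis by (simp add: dd_def DERIV_imp_deriv v)
qed

lemma dvec_has:
  assumes F: "(F has_derivative F') (at q)" and v: "F' X = v"
  shows "dvec F q X = v"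
proof -
  have l: "((\<lambda>s::real. q + s *\<^sub>R X) has_derivative (\<lambda>s. s *\<^sub>R X)) (at 0)"
    by (auto intro!: derivative_eq_intros)
  have F0: "(F has_derivative F') (at ((\<lambda>s::real. q + s *\<^sub>R X) 0))" using F by simp
  have "((\<lambda>s. F (q + s *\<^sub>R X)) has_derivative (\<lambda>s. F' (s *\<^sub>R X))) (at 0)"
    using has_derivative_compose[OF l F0] by simp
  moreover have "(\<lambda>s. F' (s *\<^sub>R X)) = (\<lambda>s. s *\<^sub>R F' X)"
    using has_derivative_bounded_linear[OF F] by (simp add: bounded_linear.linear linear_scale)
  ultimately have "((\<lambda>s. F (q + s *\<^sub>R X)) has_vector_derivative F' X) (at 0)"
    by (simp add: has_vector_derivative_def)
  then show ?thesis by (simp add: dvec_def vector_derivative_at v)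
qed

lemma dd_local:
  assumes "open S" "q \<in> S" "\<And>y. y \<in> S \<Longrightarrow> F y = G y"
    and "(G has_derivative G') (at q)" and "G' X = v"
  shows "dd F q X = v"
proof -
  have "(F has_derivative G') (at q)"
    by (rule has_derivative_transform_within_open[OF assms(4) assms(1) assms(2)]) (simp add: assms(3))
  then show ?thesis using dd_has assms(5) by blast
qed

lemma bl_xpart: "bounded_linear (xpart :: real ^ ('m::finite + 'n::finite) \<Rightarrow> real ^ 'n)"
proof -
  have "linear (xpart :: real ^ ('m::finite + 'n::finite) \<Rightarrow> real ^ 'n)"
    by (rule linearI) (simp_all add: xpart_def vec_eq_iff)
  then show ?thesis by (simp add: linear_conv_bounded_linear)
qed

lemma bl_tpart: "bounded_linear (tpart :: real ^ ('m::finite + 'n::finite) \<Rightarrow> real ^ 'm)"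
proof -
  have "linear (tpart :: real ^ ('m::finite + 'n::finite) \<Rightarrow> real ^ 'm)"
    by (rule linearI) (simp_all add: tpart_def vec_eq_iff)
  then show ?thesis by (simp add: linear_conv_bounded_linear)
qed

lemma xpart_has: "(xpart has_derivative xpart) (at q within S)"
  using bl_xpart bounded_linear_imp_has_derivative by blast
lemma tpart_has: "(tpart has_derivative tpart) (at q within S)"
  using bl_tpart bounded_linear_imp_has_derivative by blast

lemma cr_has:
  assumes "cr q \<noteq> 0"
  shows "(cr has_derivative (\<lambda>h. (xpart q \<bullet> xpart h) / cr q)) (at q within S)"
proof -
  have nz: "xpart q \<noteq> 0" using assms by (simp add: cr_def)
  have "((\<lambda>q. norm (xpart q)) has_derivative (\<lambda>h. xpart h \<bullet> sgn (xpart q))) (at q within S)"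
    using has_derivative_compose[OF xpart_has has_derivative_norm[OF nz]] by simp
  then show ?thesis
    by (simp add: cr_def[abs_def] sgn_div_norm inner_commute divide_inverse mult.commute)
qed

lemma ctau_has:
  assumes "ctau q \<noteq> 0"
  shows "(ctau has_derivative (\<lambda>h. (tpart q \<bullet> tpart h) / ctau q)) (at q within S)"
proof -
  have nz: "tpart q \<noteq> 0" using assms by (simp add: ctau_def)
  have "((\<lambda>q. norm (tpart q)) has_derivative (\<lambda>h. tpart h \<bullet> sgn (tpart q))) (at q within S)"
    using has_derivative_compose[OF tpart_has has_derivative_norm[OF nz]] by simp
  then show ?thesis
    by (simp add: ctau_def[abs_def] sgn_div_norm inner_commute divide_inverse mult.commute)
qed

lemma xpart_axis_Inr[simp]: "xpart (axis (Inr j) c :: real ^ ('m::finite + 'n::finite)) = axis j c"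
  by (simp add: xpart_def axis_def vec_eq_iff)
lemma xpart_axis_Inl[simp]: "xpart (axis (Inl i) c :: real ^ ('m::finite + 'n::finite)) = 0"
  by (simp add: xpart_def axis_def vec_eq_iff)
lemma tpart_axis_Inl[simp]: "tpart (axis (Inl i) c :: real ^ ('m::finite + 'n::finite)) = axis i c"
  by (simp add: tpart_def axis_def vec_eq_iff)
lemma tpart_axis_Inr[simp]: "tpart (axis (Inr j) c :: real ^ ('m::finite + 'n::finite)) = 0"
  by (simp add: tpart_def axis_def vec_eq_iff)
lemma xpart_nth[simp]: "xpart q $ j = q $ Inr j" by (simp add: xpart_def)
lemma tpart_nth[simp]: "tpart q $ i = q $ Inl i" by (simp add: tpart_def)

lemma xx_inner: "xpart q \<bullet> xpart q = (cr q)^2"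
  by (simp add: cr_def power2_norm_eq_inner)
lemma tt_inner: "tpart q \<bullet> tpart q = (ctau q)^2"
  by (simp add: ctau_def power2_norm_eq_inner)
lemma xx_sum: "(\<Sum>j\<in>UNIV. q $ Inr j * q $ Inr j) = (cr q)^2"
  using xx_inner[of q] by (simp add: inner_vec_def)
lemma tt_sum: "(\<Sum>i\<in>UNIV. q $ Inl i * q $ Inl i) = (ctau q)^2"
  using tt_inner[of q] by (simp add: inner_vec_def)

lemma cf_eq: "cf q = ((cr q)^2 - (ctau q)^2) / 4"
  by (simp add: cf_def cu_def cv_def field_simps power2_eq_square)

lemma crho_eq: "crho \<epsilon> q = cr q + \<epsilon> * ((cr q)^2 - (ctau q)^2) / 2"
  by (simp add: crho_def cf_eq)

lemma crho_fun: "crho \<epsilon> = (\<lambda>q. cr q + \<epsilon> * ((cr q)^2 - (ctau q)^2) / 2)"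
  by (rule ext) (simp add: crho_eq)

lemma crho_has:
  assumes "cr q \<noteq> 0" "ctau q \<noteq> 0"
  shows "(crho \<epsilon> has_derivative
     (\<lambda>h. (1 / cr q + \<epsilon>) * (xpart q \<bullet> xpart h) - \<epsilon> * (tpart q \<bullet> tpart h))) (at q within S)"
  unfolding crho_fun
  apply (rule derivative_eq_intros cr_has[OF assms(1)] ctau_has[OF assms(2)] refl)+
  using assms by (auto simp: field_simps power2_eq_square intro!: ext)

lemma cont_xpart: "continuous_on UNIV (xpart :: real ^ ('m::finite + 'n::finite) \<Rightarrow> real ^ 'n)"
  using bl_xpart linear_continuous_on by blast
lemma cont_tpart: "continuous_on UNIV (tpart :: real ^ ('m::finite + 'n::finite) \<Rightarrow> real ^ 'm)"
  using bl_tpart linear_continuous_on by blast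
lemma cont_cr: "continuous_on UNIV cr"
  unfolding cr_def[abs_def] by (intro continuous_intros cont_xpart)
lemma cont_ctau: "continuous_on UNIV ctau"
  unfolding ctau_def[abs_def] by (intro continuous_intros cont_tpart)
lemma cont_crho: "continuous_on UNIV (crho \<epsilon>)"
  unfolding crho_fun by (intro continuous_intros cont_cr cont_ctau) auto

definition SS :: "real \<Rightarrow> (real ^ ('m::finite + 'n::finite)) set" where
  "SS \<epsilon> = {q. cr q \<noteq> 0 \<and> ctau q \<noteq> 0 \<and> crho \<epsilon> q \<noteq> 0}"

lemma open_SS: "open (SS \<epsilon> :: (real ^ ('m::finite + 'n::finite)) set)"
proof -
  have "SS \<epsilon> = {q. cr q \<noteq> 0} \<inter> {q. ctau q \<noteq> 0} \<inter> {q. crho \<epsilon> q \<noteq> 0}"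
    by (auto simp: SS_def)
  moreover have "open {q::real ^ ('m::finite + 'n::finite). cr q \<noteq> 0}"
    by (rule open_Collect_neq[OF cont_cr continuous_on_const])
  moreover have "open {q::real ^ ('m::finite + 'n::finite). ctau q \<noteq> 0}"
    by (rule open_Collect_neq[OF cont_ctau continuous_on_const])
  moreover have "open {q::real ^ ('m::finite + 'n::finite). crho \<epsilon> q \<noteq> 0}"
    by (rule open_Collect_neq[OF cont_crho continuous_on_const])
  ultimately show ?thesis by (metis open_Int)
qed

lemma cu_has:
  assumes "cr q \<noteq> 0" "ctau q \<noteq> 0"
  shows "(cu has_derivative (\<lambda>h. ((tpart q \<bullet> tpart h) / ctau q - (xpart q \<bullet> xpart h) / cr q) / 2)) (at q)"
proof -
  have e: "cu = (\<lambda>q. (ctau q - cr q) / 2)" by (rule ext) (simp add: cu_def)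
  show ?thesis unfolding e
    apply (rule has_derivative_eq_rhs)
    apply (rule derivative_intros cr_has[OF assms(1)] ctau_has[OF assms(2)] | simp add: assms)+
    done
qed
lemma cv_has:
  assumes "cr q \<noteq> 0" "ctau q \<noteq> 0"
  shows "(cv has_derivative (\<lambda>h. ((tpart q \<bullet> tpart h) / ctau q + (xpart q \<bullet> xpart h) / cr q) / 2)) (at q)"
proof -
  have e: "cv = (\<lambda>q. (ctau q + cr q) / 2)" by (rule ext) (simp add: cv_def)
  show ?thesis unfolding e
    apply (rule has_derivative_eq_rhs)
    apply (rule derivative_intros cr_has[OF assms(1)] ctau_has[OF assms(2)] | simp add: assms)+
    done
qed

lemma omx_has:
  assumes "cr q \<noteq> 0"
  shows "(omx has_derivative (\<lambda>h. (1 / cr q) *\<^sub>R xpart h - ((xpart q \<bullet> xpart h) / (cr q)^3) *\<^sub>R xpart q)) (at q)"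
proof -
  have e: "omx = (\<lambda>q. (1 / cr q) *\<^sub>R xpart q)" by (rule ext) (simp add: omx_def)
  show ?thesis unfolding e
    apply (rule has_derivative_eq_rhs)
    apply (rule derivative_intros cr_has[OF assms(1)] xpart_has | simp add: assms)+
    apply (rule ext, simp add: power3_eq_cube divide_inverse mult_ac)
    done
qed

lemma omt_has:
  assumes "ctau q \<noteq> 0"
  shows "(omt has_derivative (\<lambda>h. (1 / ctau q) *\<^sub>R tpart h - ((tpart q \<bullet> tpart h) / (ctau q)^3) *\<^sub>R tpart q)) (at q)"
proof -
  have e: "omt = (\<lambda>q. (1 / ctau q) *\<^sub>R tpart q)" by (rule ext) (simp add: omt_def)
  show ?thesis unfolding e
    apply (rule has_derivative_eq_rhs)
    apply (rule derivative_intros ctau_has[OF assms(1)] tpart_has | simp add: assms)+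
    apply (rule ext, simp add: power3_eq_cube divide_inverse mult_ac)
    done
qed

definition dl :: "'a \<Rightarrow> 'a \<Rightarrow> real" where "dl j l = (if j = l then 1 else 0)"

definition kk :: "real \<Rightarrow> real ^ ('m::finite + 'n::finite) \<Rightarrow> real" where
  "kk \<epsilon> q = (crho \<epsilon> q / cr q)^2"

definition Gc :: "real \<Rightarrow> real ^ ('m::finite + 'n::finite) \<Rightarrow> ('m + 'n) \<Rightarrow> ('m + 'n) \<Rightarrow> real" where
  "Gc \<epsilon> q a b = (case a of Inl i \<Rightarrow> (case b of Inl i' \<Rightarrow> - dl i i' | Inr l \<Rightarrow> 0)
     | Inr j \<Rightarrow> (case b of Inl i \<Rightarrow> 0
     | Inr l \<Rightarrow> kk \<epsilon> q * dl j l + ((1 - kk \<epsilon> q) / (cr q)^2) * (q $ Inr j * q $ Inr l)))"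

lemma gmat_eq:
  fixes q :: "real ^ ('m::finite + 'n::finite)"
  assumes r: "cr q \<noteq> 0" and t: "ctau q \<noteq> 0"
  shows "gmat \<epsilon> q $ a $ b = Gc \<epsilon> q a b"
proof -
  note du = dd_has[OF cu_has[OF r t] refl] and dv = dd_has[OF cv_has[OF r t] refl]
   and ox = dvec_has[OF omx_has[OF r] refl] and ot = dvec_has[OF omt_has[OF t] refl]
  have r2: "xpart q \<bullet> xpart q = (cr q)^2" "tpart q \<bullet> tpart q = (ctau q)^2" by (simp_all add: xx_inner tt_inner)
  show ?thesis
    unfolding gmat_def gbar_def Gc_def kk_def dl_def
    apply (simp only: du dv ox ot vec_lambda_beta)
    apply (cases a; cases b)
    apply (simp_all add: inner_diff_left inner_diff_right inner_axis inner_axis' inner_axis_axis r2)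
    using r t by (auto simp: axis_def field_simps power2_eq_square power3_eq_cube)
qed

lemma dl_sum_left[simp]: "(\<Sum>l\<in>(UNIV::'a::finite set). dl j l * f l) = f j"
  by (simp add: dl_def if_distrib[of "\<lambda>x. x * _"] cong: if_cong)
lemma dl_sum_right[simp]: "(\<Sum>l\<in>(UNIV::'a::finite set). f l * dl l s) = f s"
  by (simp add: dl_def if_distrib[of "\<lambda>x. _ * x"] cong: if_cong)
lemma dl_sum_left'[simp]: "(\<Sum>l\<in>(UNIV::'a::finite set). dl l j * f l) = f j"
  by (simp add: dl_def if_distrib[of "\<lambda>x. x * _"] cong: if_cong)
lemma dl_sum_right'[simp]: "(\<Sum>l\<in>(UNIV::'a::finite set). f l * dl s l) = f s"
  by (simp add: dl_def if_distrib[of "\<lambda>x. _ * x"] cong: if_cong)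
lemma dl_sym: "dl l s = dl s l" by (auto simp: dl_def)
lemma dl_same[simp]: "dl j j = 1" by (simp add: dl_def)
lemma dl_trace: "(\<Sum>l\<in>(UNIV::'a::finite set). dl l l) = real CARD('a)" by simp

lemma C0:
  fixes y :: "'n::finite \<Rightarrow> real"
  shows "(\<Sum>l\<in>UNIV. (a * dl j l + b * (y j * y l)) * (c * dl l s + d * (y l * y s)))
     = a * c * dl j s + (a * d + b * c + b * d * (\<Sum>l\<in>UNIV. y l * y l)) * (y j * y s)"
proof -
  have "\<And>l. (a * dl j l + b * (y j * y l)) * (c * dl l s + d * (y l * y s)) =
     a * c * (dl j l * dl l s) + a * d * y s * (dl j l * y l) + b * c * y j * (y l * dl l s)
     + b * d * (y j * y s) * (y l * y l)"
    by (simp add: algebra_simps)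
  then have "(\<Sum>l\<in>UNIV. (a * dl j l + b * (y j * y l)) * (c * dl l s + d * (y l * y s))) =
     (\<Sum>l\<in>UNIV. a * c * (dl j l * dl l s)) + (\<Sum>l\<in>UNIV. a * d * y s * (dl j l * y l))
     + (\<Sum>l\<in>UNIV. b * c * y j * (y l * dl l s)) + (\<Sum>l\<in>UNIV. b * d * (y j * y s) * (y l * y l))"
    by (simp add: sum.distrib)
  also have "\<dots> = a * c * (\<Sum>l\<in>UNIV. dl j l * dl l s) + a * d * y s * (\<Sum>l\<in>UNIV. dl j l * y l)
     + b * c * y j * (\<Sum>l\<in>UNIV. y l * dl l s) + b * d * (y j * y s) * (\<Sum>l\<in>UNIV. y l * y l)"
    by (simp only: sum_distrib_left[symmetric])
  finally show ?thesis by (simp add: algebra_simps)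
qed

lemma matrix_inv_eq:
  fixes A B :: "real ^ 'n ^ 'n"
  assumes "A ** B = mat 1"
  shows "matrix_inv A = B"
proof -
  have BA: "B ** A = mat 1" using assms matrix_left_right_inverse by blast
  show ?thesis unfolding matrix_inv_def
  proof (rule someI2[where a = B])
    show "A ** B = mat 1 \<and> B ** A = mat 1" using assms BA by simp
  next
    fix C assume "A ** C = mat 1 \<and> C ** A = mat 1"
    then have "C = C ** (A ** B)" using assms by (simp add: matrix_mul_rid)
    also have "\<dots> = (C ** A) ** B" by (simp add: matrix_mul_assoc)
    also have "\<dots> = B" using \<open>A ** C = mat 1 \<and> C ** A = mat 1\<close> by (simp add: matrix_mul_lid)
    finally show "C = B" .
  qed
qed

definition Hc :: "real \<Rightarrow> real ^ ('m::finite + 'n::finite) \<Rightarrow> ('m + 'n) \<Rightarrow> ('m + 'n) \<Rightarrow> real" where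
  "Hc \<epsilon> q a b = (case a of Inl i \<Rightarrow> (case b of Inl i' \<Rightarrow> - dl i i' | Inr l \<Rightarrow> 0)
     | Inr j \<Rightarrow> (case b of Inl i \<Rightarrow> 0
     | Inr l \<Rightarrow> (cr q / crho \<epsilon> q)^2 * dl j l + ((1 - (cr q / crho \<epsilon> q)^2) / (cr q)^2) * (q $ Inr j * q $ Inr l)))"

lemma Hc_sym: "Hc \<epsilon> q a b = Hc \<epsilon> q b a"
  by (auto simp: Hc_def dl_sym split: sum.splits)

lemma ginv_eq:
  fixes p :: "real ^ ('m::finite + 'n::finite)"
  assumes r: "cr p \<noteq> 0" and t: "ctau p \<noteq> 0" and h: "crho \<epsilon> p \<noteq> 0"
  shows "ginv (gmat \<epsilon>) p $ a $ b = Hc \<epsilon> p a b"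
proof -
  have G: "gmat \<epsilon> p = (\<chi> a b. Gc \<epsilon> p a b)" using gmat_eq[OF r t] by (simp add: vec_eq_iff)
  have entry: "(\<Sum>i\<in>UNIV. Gc \<epsilon> p a (Inl i) * Hc \<epsilon> p (Inl i) b) + (\<Sum>j\<in>UNIV. Gc \<epsilon> p a (Inr j) * Hc \<epsilon> p (Inr j) b)
        = (if a = b then 1 else 0)" for a b :: "'m + 'n"
  proof -
    show "(\<Sum>i\<in>UNIV. Gc \<epsilon> p a (Inl i) * Hc \<epsilon> p (Inl i) b) + (\<Sum>j\<in>UNIV. Gc \<epsilon> p a (Inr j) * Hc \<epsilon> p (Inr j) b)
        = (if a = b then 1 else 0)"
    proof (cases a; cases b)
      fix i i' assume "a = Inl i" "b = Inl i'"
      then show ?thesis by (simp add: Gc_def Hc_def, simp add: dl_def)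
    next
      fix i j assume "a = Inl i" "b = Inr j"
      then show ?thesis by (simp add: Gc_def Hc_def)
    next
      fix i j assume "a = Inr j" "b = Inl i"
      then show ?thesis by (simp add: Gc_def Hc_def)
    next
      fix j s assume ab: "a = Inr j" "b = Inr s"
      have "(\<Sum>l\<in>UNIV. Gc \<epsilon> p a (Inr l) * Hc \<epsilon> p (Inr l) b) =
         kk \<epsilon> p * (cr p / crho \<epsilon> p)^2 * dl j s + (kk \<epsilon> p * ((1 - (cr p / crho \<epsilon> p)^2) / (cr p)^2)
          + ((1 - kk \<epsilon> p) / (cr p)^2) * (cr p / crho \<epsilon> p)^2
          + ((1 - kk \<epsilon> p) / (cr p)^2) * ((1 - (cr p / crho \<epsilon> p)^2) / (cr p)^2) * (cr p)^2) * (p $ Inr j * p $ Inr s)"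
        unfolding ab Gc_def Hc_def sum.case by (rule trans[OF C0[where y="\<lambda>l. p $ Inr l"]]) (simp only: xx_sum)
      also have "\<dots> = dl j s"
        using r h by (simp add: kk_def field_simps power2_eq_square)
      finally show ?thesis using ab by (simp add: Gc_def Hc_def dl_def)
    qed
  qed
  have "gmat \<epsilon> p ** (\<chi> a b. Hc \<epsilon> p a b) = mat 1"
    by (simp add: vec_eq_iff G matrix_matrix_mult_def mat_def sum_UNIV_plus entry)
  then show ?thesis unfolding ginv_def by (simp add: matrix_inv_eq)
qed

lemma nth_has: "((\<lambda>q. q $ a) has_derivative (\<lambda>h. h $ a)) (at q within S)"
  using bounded_linear_vec_nth bounded_linear_imp_has_derivative by blast

lemma axis_dl: "axis a (1::real) $ b = dl a b" by (simp add: axis_def dl_def)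

lemma inner_axis_x[simp]: "xpart q \<bullet> axis j (1::real) = q $ Inr j" by (simp add: inner_axis)
lemma inner_axis_t[simp]: "tpart q \<bullet> axis i (1::real) = q $ Inl i" by (simp add: inner_axis)

definition cA :: "real \<Rightarrow> real ^ ('m::finite + 'n::finite) \<Rightarrow> real" where
  "cA \<epsilon> q = - cr q / (2 * (crho \<epsilon> q)^2)"
definition cB :: "real \<Rightarrow> real ^ ('m::finite + 'n::finite) \<Rightarrow> real" where
  "cB \<epsilon> q = ((cr q)^2 + (ctau q)^2) / (4 * cr q * (crho \<epsilon> q)^2)"

lemma crho2: "2 * crho \<epsilon> q = 2 * cr q + \<epsilon> * ((cr q)^2 - (ctau q)^2)"
  by (simp add: crho_eq)

lemma phi_has:
  fixes q :: "real ^ ('m::finite + 'n::finite)"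
  assumes r: "cr q \<noteq> 0" and t: "ctau q \<noteq> 0" and h: "crho \<epsilon> q \<noteq> 0"
  shows "((\<lambda>q. cf q / crho \<epsilon> q) has_derivative
     (\<lambda>h. cB \<epsilon> q * (xpart q \<bullet> xpart h) + cA \<epsilon> q * (tpart q \<bullet> tpart h))) (at q)"
proof -
  have e: "(\<lambda>q. cf q / crho \<epsilon> q) = (\<lambda>q. ((cr q)^2 - (ctau q)^2) / 4 / crho \<epsilon> q)"
    by (rule ext) (simp add: cf_eq)
  show ?thesis unfolding e
    apply (rule has_derivative_eq_rhs)
    apply (rule derivative_intros cr_has[OF r] ctau_has[OF t] crho_has[OF r t] | simp add: h)+
    apply (rule ext)
    using r t h
    apply (simp add: cA_def cB_def field_simps power2_eq_square)
    using crho2[of \<epsilon> q] by algebra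
qed

lemma SS_iff: "q \<in> SS \<epsilon> \<longleftrightarrow> cr q \<noteq> 0 \<and> ctau q \<noteq> 0 \<and> crho \<epsilon> q \<noteq> 0"
  by (simp add: SS_def)

lemma pd_phi:
  fixes q :: "real ^ ('m::finite + 'n::finite)"
  assumes "q \<in> SS \<epsilon>"
  shows "pd b (\<lambda>q. cf q / crho \<epsilon> q) q = (case b of Inl i \<Rightarrow> cA \<epsilon> q * q $ Inl i | Inr j \<Rightarrow> cB \<epsilon> q * q $ Inr j)"
  unfolding pd_def
  apply (rule dd_has[OF phi_has])
  using assms apply (simp_all add: SS_iff)
  apply (cases b, simp_all add: mult.commute)
  done

definition cAx :: "real \<Rightarrow> real ^ ('m::finite + 'n::finite) \<Rightarrow> real" where
  "cAx \<epsilon> q = - 1 / (2 * cr q * (crho \<epsilon> q)^2) + (1 + \<epsilon> * cr q) / (crho \<epsilon> q)^3"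
definition cAt :: "real \<Rightarrow> real ^ ('m::finite + 'n::finite) \<Rightarrow> real" where
  "cAt \<epsilon> q = - \<epsilon> * cr q / (crho \<epsilon> q)^3"
definition cBx :: "real \<Rightarrow> real ^ ('m::finite + 'n::finite) \<Rightarrow> real" where
  "cBx \<epsilon> q = (8 * cr q * (crho \<epsilon> q)^2 - ((cr q)^2 + (ctau q)^2) * (4 * (crho \<epsilon> q)^2 / cr q
     + 8 * crho \<epsilon> q * (1 + \<epsilon> * cr q))) / (16 * (cr q)^2 * (crho \<epsilon> q)^4)"
definition cBt :: "real \<Rightarrow> real ^ ('m::finite + 'n::finite) \<Rightarrow> real" where
  "cBt \<epsilon> q = (8 * cr q * (crho \<epsilon> q)^2 + 8 * cr q * crho \<epsilon> q * \<epsilon> * ((cr q)^2 + (ctau q)^2))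
     / (16 * (cr q)^2 * (crho \<epsilon> q)^4)"

lemma cA_has:
  fixes q :: "real ^ ('m::finite + 'n::finite)"
  assumes r: "cr q \<noteq> 0" and t: "ctau q \<noteq> 0" and h: "crho \<epsilon> q \<noteq> 0"
  shows "(cA \<epsilon> has_derivative (\<lambda>h. cAx \<epsilon> q * (xpart q \<bullet> xpart h) + cAt \<epsilon> q * (tpart q \<bullet> tpart h))) (at q)"
proof -
  have e: "cA \<epsilon> = (\<lambda>q. - cr q / (2 * (crho \<epsilon> q)^2))" by (rule ext) (simp add: cA_def)
  show ?thesis unfolding e
    apply (rule has_derivative_eq_rhs)
    apply (rule derivative_intros cr_has[OF r] ctau_has[OF t] crho_has[OF r t] | simp add: h)+
    apply (rule ext)
    using r t h
    apply (simp add: cAx_def cAt_def field_simps power2_eq_square power3_eq_cube)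
    done
qed

lemma cB_has:
  fixes q :: "real ^ ('m::finite + 'n::finite)"
  assumes r: "cr q \<noteq> 0" and t: "ctau q \<noteq> 0" and h: "crho \<epsilon> q \<noteq> 0"
  shows "(cB \<epsilon> has_derivative (\<lambda>h. cBx \<epsilon> q * (xpart q \<bullet> xpart h) + cBt \<epsilon> q * (tpart q \<bullet> tpart h))) (at q)"
proof -
  have e: "cB \<epsilon> = (\<lambda>q. ((cr q)^2 + (ctau q)^2) / (4 * cr q * (crho \<epsilon> q)^2))" by (rule ext) (simp add: cB_def)
  show ?thesis unfolding e
    apply (rule has_derivative_eq_rhs)
    apply (rule derivative_intros cr_has[OF r] ctau_has[OF t] crho_has[OF r t] | simp add: h r)+
    apply (rule ext)
    using r t h
    apply (simp add: cBx_def cBt_def field_simps power2_eq_square power3_eq_cube)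
    apply algebra
    done
qed

lemma X_tt:
  fixes p :: "real ^ ('m::finite + 'n::finite)"
  assumes p: "p \<in> SS \<epsilon>"
  shows "pd (Inl i') (pd (Inl i) (\<lambda>q. cf q / crho \<epsilon> q)) p = cA \<epsilon> p * dl i' i + cAt \<epsilon> p * (p $ Inl i' * p $ Inl i)"
proof -
  have r: "cr p \<noteq> 0" and t: "ctau p \<noteq> 0" and h: "crho \<epsilon> p \<noteq> 0" using p by (auto simp: SS_iff)
  show ?thesis
  unfolding pd_def[of "Inl i'"]
  apply (rule dd_local[OF open_SS p, where G = "\<lambda>q. cA \<epsilon> q * q $ Inl i", OF _ has_derivative_mult[OF cA_has[OF r t h] nth_has]])
  apply (simp add: pd_phi)
  apply (simp add: axis_dl dl_def)
  done
qed

lemma X_xx: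
  fixes p :: "real ^ ('m::finite + 'n::finite)"
  assumes p: "p \<in> SS \<epsilon>"
  shows "pd (Inr l) (pd (Inr j) (\<lambda>q. cf q / crho \<epsilon> q)) p = cB \<epsilon> p * dl l j + cBx \<epsilon> p * (p $ Inr l * p $ Inr j)"
proof -
  have r: "cr p \<noteq> 0" and t: "ctau p \<noteq> 0" and h: "crho \<epsilon> p \<noteq> 0" using p by (auto simp: SS_iff)
  show ?thesis
  unfolding pd_def[of "Inr l"]
  apply (rule dd_local[OF open_SS p, where G = "\<lambda>q. cB \<epsilon> q * q $ Inr j", OF _ has_derivative_mult[OF cB_has[OF r t h] nth_has]])
  apply (simp add: pd_phi)
  apply (simp add: axis_dl dl_def)
  done
qed

definition ckx :: "real \<Rightarrow> real ^ ('m::finite + 'n::finite) \<Rightarrow> real" where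
  "ckx \<epsilon> q = 2 * crho \<epsilon> q * (1 + \<epsilon> * cr q - crho \<epsilon> q / cr q) / (cr q)^3"
definition ckt :: "real \<Rightarrow> real ^ ('m::finite + 'n::finite) \<Rightarrow> real" where
  "ckt \<epsilon> q = - 2 * \<epsilon> * crho \<epsilon> q / (cr q)^2"

lemma kk_has:
  fixes q :: "real ^ ('m::finite + 'n::finite)"
  assumes r: "cr q \<noteq> 0" and t: "ctau q \<noteq> 0" and h: "crho \<epsilon> q \<noteq> 0"
  shows "(kk \<epsilon> has_derivative (\<lambda>h. ckx \<epsilon> q * (xpart q \<bullet> xpart h) + ckt \<epsilon> q * (tpart q \<bullet> tpart h))) (at q)"
proof -
  have e: "kk \<epsilon> = (\<lambda>q. (crho \<epsilon> q / cr q)^2)" by (rule ext) (simp add: kk_def)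
  show ?thesis unfolding e
    apply (rule has_derivative_eq_rhs)
    apply (rule derivative_intros cr_has[OF r] crho_has[OF r t] | simp add: r)+
    apply (rule ext)
    using r t h
    apply (simp add: ckx_def ckt_def field_simps power2_eq_square power3_eq_cube)
    done
qed

definition dGc :: "real \<Rightarrow> real ^ ('m::finite + 'n::finite) \<Rightarrow> ('m + 'n) \<Rightarrow> ('m + 'n) \<Rightarrow> ('m + 'n) \<Rightarrow> real" where
  "dGc \<epsilon> p a d b = (case d of Inl _ \<Rightarrow> 0 | Inr j \<Rightarrow> (case b of Inl _ \<Rightarrow> 0 | Inr l \<Rightarrow>
     (case a of Inl i \<Rightarrow> ckt \<epsilon> p * p $ Inl i * dl j l + (- ckt \<epsilon> p / (cr p)^2) * p $ Inl i * (p $ Inr j * p $ Inr l)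
      | Inr s \<Rightarrow> ckx \<epsilon> p * p $ Inr s * dl j l
         + (- ckx \<epsilon> p / (cr p)^2 - 2 * (1 - kk \<epsilon> p) / (cr p)^4) * p $ Inr s * (p $ Inr j * p $ Inr l)
         + ((1 - kk \<epsilon> p) / (cr p)^2) * (dl s j * p $ Inr l + dl s l * p $ Inr j))))"

lemma dG_eq:
  fixes p :: "real ^ ('m::finite + 'n::finite)"
  assumes p: "p \<in> SS \<epsilon>"
  shows "pd a (\<lambda>q. gmat \<epsilon> q $ d $ b) p = dGc \<epsilon> p a d b"
proof -
  have r: "cr p \<noteq> 0" and t: "ctau p \<noteq> 0" and h: "crho \<epsilon> p \<noteq> 0" using p by (auto simp: SS_iff)
  have loc: "\<And>y. y \<in> SS \<epsilon> \<Longrightarrow> gmat \<epsilon> y $ d $ b = Gc \<epsilon> y d b"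
    by (rule gmat_eq) (auto simp: SS_iff)
  show ?thesis
  proof (cases d; cases b)
    fix i i' assume db: "d = Inl i" "b = Inl i'"
    have e: "(\<lambda>y. Gc \<epsilon> y d b) = (\<lambda>y. - dl i i')" by (simp add: db Gc_def)
    have hd: "((\<lambda>y. Gc \<epsilon> y d b) has_derivative (\<lambda>h. 0)) (at p)" unfolding e by simp
    have v: "dGc \<epsilon> p a d b = 0" by (simp add: db dGc_def)
    show ?thesis unfolding pd_def v
      by (rule dd_local[OF open_SS p loc hd]) simp_all
  next
    fix i l assume db: "d = Inl i" "b = Inr l"
    have e: "(\<lambda>y. Gc \<epsilon> y d b) = (\<lambda>y. 0)" by (simp add: db Gc_def)
    have hd: "((\<lambda>y. Gc \<epsilon> y d b) has_derivative (\<lambda>h. 0)) (at p)" unfolding e by simp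
    have v: "dGc \<epsilon> p a d b = 0" by (simp add: db dGc_def)
    show ?thesis unfolding pd_def v
      by (rule dd_local[OF open_SS p loc hd]) simp_all
  next
    fix i l assume db: "d = Inr l" "b = Inl i"
    have e: "(\<lambda>y. Gc \<epsilon> y d b) = (\<lambda>y. 0)" by (simp add: db Gc_def)
    have hd: "((\<lambda>y. Gc \<epsilon> y d b) has_derivative (\<lambda>h. 0)) (at p)" unfolding e by simp
    have v: "dGc \<epsilon> p a d b = 0" by (simp add: db dGc_def)
    show ?thesis unfolding pd_def v
      by (rule dd_local[OF open_SS p loc hd]) simp_all
  next
    fix j l assume db: "d = Inr j" "b = Inr l"
    have e: "(\<lambda>y. Gc \<epsilon> y d b) = (\<lambda>q. kk \<epsilon> q * dl j l + ((1 - kk \<epsilon> q) / (cr q)^2) * (q $ Inr j * q $ Inr l))"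
      by (simp add: db Gc_def)
    show ?thesis unfolding pd_def
      apply (rule dd_local[OF open_SS p loc])
      unfolding e
      apply (rule derivative_intros kk_has[OF r t h] cr_has[OF r] nth_has | simp add: r)+
      apply (cases a)
      using r
      apply (simp_all add: db dGc_def axis_dl dl_def field_simps power2_eq_square power3_eq_cube)
      apply (simp add: power4_eq_xxxx)
      done
  qed
qed

lemma wave_alg:
  fixes H X :: "'i::finite \<Rightarrow> 'i \<Rightarrow> real" and dG :: "'i \<Rightarrow> 'i \<Rightarrow> 'i \<Rightarrow> real" and f1 :: "'i \<Rightarrow> real"
  assumes sym: "\<And>a b. H a b = H b a"
  shows "(\<Sum>a\<in>UNIV. \<Sum>b\<in>UNIV. H a b * (X a b - (\<Sum>c\<in>UNIV. ((1/2) * (\<Sum>d\<in>UNIV. H c d * (dG a d b + dG b d a - dG d a b))) * f1 c)))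
   = (\<Sum>a\<in>UNIV. \<Sum>b\<in>UNIV. H a b * X a b) - (1/2) * (\<Sum>d\<in>UNIV. (\<Sum>c\<in>UNIV. H c d * f1 c) *
       (2 * (\<Sum>a\<in>UNIV. \<Sum>b\<in>UNIV. H a b * dG a d b) - (\<Sum>a\<in>UNIV. \<Sum>b\<in>UNIV. H a b * dG d a b)))"
proof -
  define T where "T a b d = dG a d b + dG b d a - dG d a b" for a b d
  have 1: "(\<Sum>c\<in>UNIV. ((1/2) * (\<Sum>d\<in>UNIV. H c d * T a b d)) * f1 c)
     = (1/2) * (\<Sum>d\<in>UNIV. (\<Sum>c\<in>UNIV. H c d * f1 c) * T a b d)" for a b
  proof -
    have "(\<Sum>c\<in>UNIV. ((1/2) * (\<Sum>d\<in>UNIV. H c d * T a b d)) * f1 c)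
        = (1/2) * (\<Sum>c\<in>UNIV. \<Sum>d\<in>UNIV. H c d * f1 c * T a b d)"
      by (simp add: sum_distrib_left sum_distrib_right mult_ac)
    also have "\<dots> = (1/2) * (\<Sum>d\<in>UNIV. \<Sum>c\<in>UNIV. H c d * f1 c * T a b d)"
      by (rule arg_cong[where f="\<lambda>x. (1/2) * x"], rule sum.swap)
    also have "\<dots> = (1/2) * (\<Sum>d\<in>UNIV. (\<Sum>c\<in>UNIV. H c d * f1 c) * T a b d)"
      by (simp add: sum_distrib_right)
    finally show ?thesis .
  qed
  have 2: "(\<Sum>a\<in>UNIV. \<Sum>b\<in>UNIV. H a b * ((1/2) * (\<Sum>d\<in>UNIV. (\<Sum>c\<in>UNIV. H c d * f1 c) * T a b d)))
      = (1/2) * (\<Sum>d\<in>UNIV. (\<Sum>c\<in>UNIV. H c d * f1 c) * (\<Sum>a\<in>UNIV. \<Sum>b\<in>UNIV. H a b * T a b d))"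
  proof -
    have "(\<Sum>a\<in>UNIV. \<Sum>b\<in>UNIV. H a b * ((1/2) * (\<Sum>d\<in>UNIV. (\<Sum>c\<in>UNIV. H c d * f1 c) * T a b d)))
       = (1/2) * (\<Sum>a\<in>UNIV. \<Sum>b\<in>UNIV. \<Sum>d\<in>UNIV. (\<Sum>c\<in>UNIV. H c d * f1 c) * (H a b * T a b d))"
      by (simp add: sum_distrib_left mult_ac)
    also have "\<dots> = (1/2) * (\<Sum>a\<in>UNIV. \<Sum>d\<in>UNIV. \<Sum>b\<in>UNIV. (\<Sum>c\<in>UNIV. H c d * f1 c) * (H a b * T a b d))"
      by (rule arg_cong[where f="\<lambda>x. (1/2) * x"], rule sum.cong[OF refl], rule sum.swap)
    also have "\<dots> = (1/2) * (\<Sum>d\<in>UNIV. \<Sum>a\<in>UNIV. \<Sum>b\<in>UNIV. (\<Sum>c\<in>UNIV. H c d * f1 c) * (H a b * T a b d))"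
      by (rule arg_cong[where f="\<lambda>x. (1/2) * x"], rule sum.swap)
    also have "\<dots> = (1/2) * (\<Sum>d\<in>UNIV. (\<Sum>c\<in>UNIV. H c d * f1 c) * (\<Sum>a\<in>UNIV. \<Sum>b\<in>UNIV. H a b * T a b d))"
      by (simp add: sum_distrib_left)
    finally show ?thesis .
  qed
  have 3: "(\<Sum>a\<in>UNIV. \<Sum>b\<in>UNIV. H a b * T a b d) =
      2 * (\<Sum>a\<in>UNIV. \<Sum>b\<in>UNIV. H a b * dG a d b) - (\<Sum>a\<in>UNIV. \<Sum>b\<in>UNIV. H a b * dG d a b)" for d
  proof -
    have s: "(\<Sum>a\<in>UNIV. \<Sum>b\<in>UNIV. H a b * dG b d a) = (\<Sum>a\<in>UNIV. \<Sum>b\<in>UNIV. H a b * dG a d b)"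
      by (subst sum.swap) (simp add: sym)
    show ?thesis unfolding T_def
      by (simp add: algebra_simps sum.distrib sum_subtractf s)
  qed
  have "(\<Sum>a\<in>UNIV. \<Sum>b\<in>UNIV. H a b * (X a b - (\<Sum>c\<in>UNIV. ((1/2) * (\<Sum>d\<in>UNIV. H c d * T a b d)) * f1 c)))
      = (\<Sum>a\<in>UNIV. \<Sum>b\<in>UNIV. H a b * (X a b - (1/2) * (\<Sum>d\<in>UNIV. (\<Sum>c\<in>UNIV. H c d * f1 c) * T a b d)))"
    by (simp only: 1)
  also have "\<dots> = (\<Sum>a\<in>UNIV. \<Sum>b\<in>UNIV. H a b * X a b) - (\<Sum>a\<in>UNIV. \<Sum>b\<in>UNIV. H a b * ((1/2) * (\<Sum>d\<in>UNIV. (\<Sum>c\<in>UNIV. H c d * f1 c) * T a b d)))"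
    by (simp only: right_diff_distrib sum_subtractf)
  also have "\<dots> = (\<Sum>a\<in>UNIV. \<Sum>b\<in>UNIV. H a b * X a b) - (1/2) * (\<Sum>d\<in>UNIV. (\<Sum>c\<in>UNIV. H c d * f1 c) * (\<Sum>a\<in>UNIV. \<Sum>b\<in>UNIV. H a b * T a b d))"
    by (simp only: 2)
  also have "\<dots> = (\<Sum>a\<in>UNIV. \<Sum>b\<in>UNIV. H a b * X a b) - (1/2) * (\<Sum>d\<in>UNIV. (\<Sum>c\<in>UNIV. H c d * f1 c) *
       (2 * (\<Sum>a\<in>UNIV. \<Sum>b\<in>UNIV. H a b * dG a d b) - (\<Sum>a\<in>UNIV. \<Sum>b\<in>UNIV. H a b * dG d a b)))"
    by (simp only: 3)
  finally show ?thesis by (simp only: T_def)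
qed


lemma C2:
  fixes y :: "'n::finite \<Rightarrow> real"
  shows "(\<Sum>j\<in>UNIV. \<Sum>l\<in>UNIV. (a * dl j l + b * (y j * y l)) * (c * dl j l + d * (y j * y l)))
     = real (card (UNIV::'n set)) * a * c + (a * d + b * c) * (\<Sum>l\<in>UNIV. y l * y l) + b * d * (\<Sum>l\<in>UNIV. y l * y l)^2"
proof -
  define S where "S = (\<Sum>l\<in>UNIV. y l * y l)"
  have row: "(\<Sum>l\<in>UNIV. (a * dl j l + b * (y j * y l)) * (c * dl j l + d * (y j * y l)))
     = a * c + (a * d + b * c + b * d * S) * (y j * y j)" for j
  proof -
    have "(\<Sum>l\<in>UNIV. (a * dl j l + b * (y j * y l)) * (c * dl j l + d * (y j * y l)))
       = (\<Sum>l\<in>UNIV. (a * dl j l + b * (y j * y l)) * (c * dl l j + d * (y l * y j)))"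
      by (rule sum.cong) (auto simp: dl_def mult.commute)
    also have "\<dots> = a * c + (a * d + b * c + b * d * S) * (y j * y j)"
      by (simp add: C0 S_def)
    finally show ?thesis .
  qed
  have "(\<Sum>j\<in>UNIV. \<Sum>l\<in>UNIV. (a * dl j l + b * (y j * y l)) * (c * dl j l + d * (y j * y l)))
     = (\<Sum>j\<in>UNIV. a * c + (a * d + b * c + b * d * S) * (y j * y j))"
    by (simp only: row)
  also have "\<dots> = real (card (UNIV::'n set)) * a * c + (a * d + b * c + b * d * S) * S"
    by (simp add: sum.distrib sum_distrib_left S_def)
  also have "\<dots> = real (card (UNIV::'n set)) * a * c + (a * d + b * c) * S + b * d * S^2"
    by (simp add: power2_eq_square algebra_simps)
  finally show ?thesis unfolding S_def .
qed

lemma Hrow: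
  fixes y :: "'n::finite \<Rightarrow> real"
  shows "(\<Sum>j\<in>UNIV. (a * dl s j + b * (y s * y j)) * F j) = a * F s + b * y s * (\<Sum>j\<in>UNIV. y j * F j)"
proof -
  have "(\<Sum>j\<in>UNIV. (a * dl s j + b * (y s * y j)) * F j) = (\<Sum>j\<in>UNIV. a * (dl s j * F j) + (b * y s) * (y j * F j))"
    by (rule sum.cong) (simp_all add: algebra_simps)
  also have "\<dots> = a * F s + b * y s * (\<Sum>j\<in>UNIV. y j * F j)"
    by (simp only: sum.distrib sum_distrib_left[symmetric] dl_sum_left)
  finally show ?thesis .
qed

lemma Hcol:
  fixes y :: "'n::finite \<Rightarrow> real"
  shows "(\<Sum>j\<in>UNIV. (a * dl j s + b * (y j * y s)) * F j) = a * F s + b * y s * (\<Sum>j\<in>UNIV. y j * F j)"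
proof -
  have "(\<Sum>j\<in>UNIV. (a * dl j s + b * (y j * y s)) * F j) = (\<Sum>j\<in>UNIV. (a * dl s j + b * (y s * y j)) * F j)"
    by (rule sum.cong) (simp_all add: dl_sym mult.commute)
  then show ?thesis by (simp only: Hrow)
qed

lemma S3:
  fixes y :: "'n::finite \<Rightarrow> real"
  shows "(\<Sum>s\<in>UNIV. c1 * (dl l s * y s) + c2 * (y s * y s) + c3 * dl s s)
     = c1 * y l + c2 * (\<Sum>s\<in>UNIV. y s * y s) + c3 * real (card (UNIV::'n set))"
  by (simp only: sum.distrib sum_distrib_left[symmetric] dl_sum_left dl_same) simp

lemma S3':
  fixes y :: "'n::finite \<Rightarrow> real"
  shows "(\<Sum>j\<in>UNIV. c1 * (dl l j * y j) + c2 * (y j * y j) + c3 * (dl s j * y j))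
     = c1 * y l + c2 * (\<Sum>j\<in>UNIV. y j * y j) + c3 * y s"
  by (simp only: sum.distrib sum_distrib_left[symmetric] dl_sum_left)

lemma C1:
  fixes y :: "'n::finite \<Rightarrow> real"
  shows "(\<Sum>j\<in>UNIV. (a * dl j l + b * (y j * y l)) * (c * y j)) = c * (a + b * (\<Sum>j\<in>UNIV. y j * y j)) * y l"
proof -
  have "(\<Sum>j\<in>UNIV. (a * dl j l + b * (y j * y l)) * (c * y j)) = a * (c * y l) + b * y l * (\<Sum>j\<in>UNIV. y j * (c * y j))"
    by (rule Hcol)
  also have "(\<Sum>j\<in>UNIV. y j * (c * y j)) = c * (\<Sum>j\<in>UNIV. y j * y j)"
    by (simp add: sum_distrib_left mult_ac)
  finally show ?thesis by (simp add: algebra_simps)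
qed

lemma C3:
  fixes y :: "'n::finite \<Rightarrow> real"
  shows "(\<Sum>s\<in>UNIV. \<Sum>j\<in>UNIV. (a * dl s j + b * (y s * y j)) *
      (K1 * y s * dl l j + K2 * y s * (y l * y j) + K3 * (dl s l * y j + dl s j * y l)))
   = (a * (K1 + K2 * (\<Sum>j\<in>UNIV. y j * y j) + (real (card (UNIV::'n set)) + 1) * K3)
      + b * (K1 * (\<Sum>j\<in>UNIV. y j * y j) + K2 * (\<Sum>j\<in>UNIV. y j * y j)^2 + 2 * K3 * (\<Sum>j\<in>UNIV. y j * y j))) * y l"
proof -
  define S where "S = (\<Sum>j\<in>UNIV. y j * y j)"
  define n where "n = real (card (UNIV::'n set))"
  have inner: "(\<Sum>j\<in>UNIV. y j * (K1 * y s * dl l j + K2 * y s * (y l * y j) + K3 * (dl s l * y j + dl s j * y l)))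
     = (K1 * y s) * y l + (K2 * y s * y l + K3 * dl s l) * S + (K3 * y l) * y s" for s
  proof -
    have "(\<Sum>j\<in>UNIV. y j * (K1 * y s * dl l j + K2 * y s * (y l * y j) + K3 * (dl s l * y j + dl s j * y l)))
      = (\<Sum>j\<in>UNIV. (K1 * y s) * (dl l j * y j) + (K2 * y s * y l + K3 * dl s l) * (y j * y j) + (K3 * y l) * (dl s j * y j))"
      by (rule sum.cong) (simp_all add: algebra_simps)
    then show ?thesis by (simp only: S3' S_def)
  qed
  have "(\<Sum>s\<in>UNIV. \<Sum>j\<in>UNIV. (a * dl s j + b * (y s * y j)) *
      (K1 * y s * dl l j + K2 * y s * (y l * y j) + K3 * (dl s l * y j + dl s j * y l)))
    = (\<Sum>s\<in>UNIV. a * (K1 * y s * dl l s + K2 * y s * (y l * y s) + K3 * (dl s l * y s + dl s s * y l))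
        + b * y s * ((K1 * y s) * y l + (K2 * y s * y l + K3 * dl s l) * S + (K3 * y l) * y s))"
    by (rule sum.cong[OF refl], rule trans[OF Hrow], simp only: inner)
  also have "\<dots> = (\<Sum>s\<in>UNIV. (a * K1 + a * K3 + b * K3 * S) * (dl l s * y s)
        + (a * K2 * y l + b * K1 * y l + b * K2 * y l * S + b * K3 * y l) * (y s * y s) + (a * K3 * y l) * dl s s)"
    by (rule sum.cong) (simp_all add: algebra_simps dl_def)
  also have "\<dots> = (a * K1 + a * K3 + b * K3 * S) * y l + (a * K2 * y l + b * K1 * y l + b * K2 * y l * S + b * K3 * y l) * S
      + (a * K3 * y l) * n"
    by (simp only: S3 S_def n_def)
  finally show ?thesis unfolding S_def[symmetric] n_def[symmetric] by (simp add: algebra_simps power2_eq_square)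
qed

lemma C4:
  fixes y :: "'n::finite \<Rightarrow> real"
  shows "(\<Sum>j\<in>UNIV. \<Sum>l\<in>UNIV. (a * dl j l + b * (y j * y l)) *
      (K1 * y s * dl j l + K2 * y s * (y j * y l) + K3 * (dl s j * y l + dl s l * y j)))
   = (a * (real (card (UNIV::'n set)) * K1 + K2 * (\<Sum>j\<in>UNIV. y j * y j) + 2 * K3)
      + b * (K1 * (\<Sum>j\<in>UNIV. y j * y j) + K2 * (\<Sum>j\<in>UNIV. y j * y j)^2 + 2 * K3 * (\<Sum>j\<in>UNIV. y j * y j))) * y s"
proof -
  define S where "S = (\<Sum>j\<in>UNIV. y j * y j)"
  define n where "n = real (card (UNIV::'n set))"
  have inner: "(\<Sum>l\<in>UNIV. y l * (K1 * y s * dl j l + K2 * y s * (y j * y l) + K3 * (dl s j * y l + dl s l * y j)))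
     = (K1 * y s) * y j + (K2 * y s * y j + K3 * dl s j) * S + (K3 * y j) * y s" for j
  proof -
    have "(\<Sum>l\<in>UNIV. y l * (K1 * y s * dl j l + K2 * y s * (y j * y l) + K3 * (dl s j * y l + dl s l * y j)))
      = (\<Sum>l\<in>UNIV. (K1 * y s) * (dl j l * y l) + (K2 * y s * y j + K3 * dl s j) * (y l * y l) + (K3 * y j) * (dl s l * y l))"
      by (rule sum.cong) (simp_all add: algebra_simps)
    then show ?thesis by (simp only: S3' S_def)
  qed
  have "(\<Sum>j\<in>UNIV. \<Sum>l\<in>UNIV. (a * dl j l + b * (y j * y l)) *
      (K1 * y s * dl j l + K2 * y s * (y j * y l) + K3 * (dl s j * y l + dl s l * y j)))
    = (\<Sum>j\<in>UNIV. a * (K1 * y s * dl j j + K2 * y s * (y j * y j) + K3 * (dl s j * y j + dl s j * y j))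
        + b * y j * ((K1 * y s) * y j + (K2 * y s * y j + K3 * dl s j) * S + (K3 * y j) * y s))"
    by (rule sum.cong[OF refl], rule trans[OF Hrow], simp only: inner)
  also have "\<dots> = (\<Sum>j\<in>UNIV. (2 * a * K3 + b * K3 * S) * (dl s j * y j)
        + (a * K2 * y s + b * K1 * y s + b * K2 * y s * S + b * K3 * y s) * (y j * y j) + (a * K1 * y s) * dl j j)"
    by (rule sum.cong) (simp_all add: algebra_simps)
  also have "\<dots> = (2 * a * K3 + b * K3 * S) * y s + (a * K2 * y s + b * K1 * y s + b * K2 * y s * S + b * K3 * y s) * S
      + (a * K1 * y s) * n"
    by (simp only: S3 S_def n_def)
  finally show ?thesis unfolding S_def[symmetric] n_def[symmetric] by (simp add: algebra_simps power2_eq_square)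
qed


lemma final_alg:
  fixes r \<tau> \<rho> \<epsilon> n m :: real
  assumes r: "r \<noteq> 0" and h: "\<rho> \<noteq> 0" and rel: "2 * \<rho> = 2 * r + \<epsilon> * (r^2 - \<tau>^2)"
  and A: "A = - r / (2 * \<rho>^2)" and At: "At = - \<epsilon> * r / \<rho>^3"
  and B: "B = (r^2 + \<tau>^2) / (4 * r * \<rho>^2)"
  and Bx: "Bx = (8 * r * \<rho>^2 - (r^2 + \<tau>^2) * (4 * \<rho>^2 / r + 8 * \<rho> * (1 + \<epsilon> * r))) / (16 * r^2 * \<rho>^4)"
  and k: "k = (\<rho> / r)^2" and al: "al = (r / \<rho>)^2" and be: "be = (1 - al) / r^2"
  and kx: "kx = 2 * \<rho> * (1 + \<epsilon> * r - \<rho> / r) / r^3" and kt: "kt = - 2 * \<epsilon> * \<rho> / r^2"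
  shows "(- (m * A + At * \<tau>^2) + (n * al * B + (al * Bx + be * B) * r^2 + be * Bx * (r^2)^2))
     - (1/2) * (A * (n * al * kt + (al * (- kt / r^2) + be * kt) * r^2 + be * (- kt / r^2) * (r^2)^2) * \<tau>^2
       + B * (al + be * r^2) * (2 * (al * (kx + (- kx / r^2 - 2 * (1 - k) / r^4) * r^2 + (n + 1) * ((1 - k) / r^2))
            + be * (kx * r^2 + (- kx / r^2 - 2 * (1 - k) / r^4) * (r^2)^2 + 2 * ((1 - k) / r^2) * r^2))
         - (al * (n * kx + (- kx / r^2 - 2 * (1 - k) / r^4) * r^2 + 2 * ((1 - k) / r^2))
            + be * (kx * r^2 + (- kx / r^2 - 2 * (1 - k) / r^4) * (r^2)^2 + 2 * ((1 - k) / r^2) * r^2))) * r^2)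
     = - (n - 3) * ((r^2 - \<tau>^2) / 4) / \<rho>^3 + (n + m - 2) * r / (2 * \<rho>^2)"
proof -
  have "\<epsilon> * (r^2 - \<tau>^2) = 2 * \<rho> - 2 * r" using rel by simp
  show ?thesis
    unfolding kx kt be al k A At B Bx
    using r h
    apply (simp add: field_simps power2_eq_square power3_eq_cube power4_eq_xxxx)
    using rel by algebra
qed

lemma fs1: "(- A * t) * (2 * 0 - (n * al * (kt * t) + (al * (d * t) + be * (kt * t)) * S + be * (d * t) * S2))
   = (A * (n * al * kt + (al * d + be * kt) * S + be * d * S2)) * (t * (t::real))"
  by (simp add: algebra_simps)

lemma fs2: "(c * y) * (2 * (a * y) - b * y) = (c * (2 * a - b)) * (y * (y::real))"
  by (simp add: algebra_simps)

lemma T1t: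
  fixes t :: "'m::finite \<Rightarrow> real"
  shows "(\<Sum>i'\<in>UNIV. \<Sum>i\<in>UNIV. (- dl i' i) * (c * dl i' i + d * (t i' * t i)))
     = - (real CARD('m) * c + d * (\<Sum>i\<in>UNIV. t i * t i))"
proof -
  have "(\<Sum>i'\<in>UNIV. \<Sum>i\<in>UNIV. (- dl i' i) * (c * dl i' i + d * (t i' * t i))) = (\<Sum>i'\<in>UNIV. - (c + d * (t i' * t i')))"
    by (rule sum.cong[OF refl]) (simp add: sum_negf)
  also have "\<dots> = - (real CARD('m) * c + d * (\<Sum>i\<in>UNIV. t i * t i))"
    by (simp add: sum_subtractf sum_negf sum.distrib sum_distrib_left)
  finally show ?thesis .
qed

lemma wt:
  fixes t :: "'m::finite \<Rightarrow> real"
  shows "(\<Sum>i'\<in>UNIV. (- dl i' i) * (c * t i')) = - c * t i"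
  by (simp add: sum_negf)

context
  fixes \<epsilon> :: real and p :: "real ^ ('m::finite + 'n::finite)"
  assumes p: "p \<in> SS \<epsilon>"
begin

abbreviation "al \<equiv> (cr p / crho \<epsilon> p)^2"
abbreviation "be \<equiv> (1 - (cr p / crho \<epsilon> p)^2) / (cr p)^2"
abbreviation "K2 \<equiv> - ckx \<epsilon> p / (cr p)^2 - 2 * (1 - kk \<epsilon> p) / (cr p)^4"
abbreviation "K3 \<equiv> (1 - kk \<epsilon> p) / (cr p)^2"
abbreviation "SX \<equiv> (\<Sum>j\<in>UNIV. p $ Inr j * p $ Inr j)"
abbreviation "ST \<equiv> (\<Sum>i\<in>UNIV. p $ Inl i * p $ Inl i)"

lemma T1_eq:
  "(\<Sum>a\<in>UNIV. \<Sum>b\<in>UNIV. Hc \<epsilon> p a b * pd a (pd b (\<lambda>q. cf q / crho \<epsilon> q)) p)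
    = - (real CARD('m) * cA \<epsilon> p + cAt \<epsilon> p * ST)
      + (real CARD('n) * al * cB \<epsilon> p + (al * cBx \<epsilon> p + be * cB \<epsilon> p) * SX + be * cBx \<epsilon> p * SX^2)"
proof -
  have "(\<Sum>a\<in>UNIV. \<Sum>b\<in>UNIV. Hc \<epsilon> p a b * pd a (pd b (\<lambda>q. cf q / crho \<epsilon> q)) p)
     = (\<Sum>i'\<in>UNIV. \<Sum>i\<in>UNIV. (- dl i' i) * (cA \<epsilon> p * dl i' i + cAt \<epsilon> p * (p $ Inl i' * p $ Inl i)))
     + (\<Sum>l\<in>UNIV. \<Sum>j\<in>UNIV. (al * dl l j + be * (p $ Inr l * p $ Inr j)) * (cB \<epsilon> p * dl l j + cBx \<epsilon> p * (p $ Inr l * p $ Inr j)))"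
    by (simp only: sum_UNIV_plus sum.distrib Hc_def sum.case mult_zero_left sum.neutral_const
        add_0_right add_0_left X_tt[OF p] X_xx[OF p])
  also have "(\<Sum>i'\<in>UNIV. \<Sum>i\<in>UNIV. (- dl i' i) * (cA \<epsilon> p * dl i' i + cAt \<epsilon> p * (p $ Inl i' * p $ Inl i)))
     = - (real CARD('m) * cA \<epsilon> p + cAt \<epsilon> p * ST)"
    by (rule T1t)
  also have "(\<Sum>l\<in>UNIV. \<Sum>j\<in>UNIV. (al * dl l j + be * (p $ Inr l * p $ Inr j)) * (cB \<epsilon> p * dl l j + cBx \<epsilon> p * (p $ Inr l * p $ Inr j)))
     = real CARD('n) * al * cB \<epsilon> p + (al * cBx \<epsilon> p + be * cB \<epsilon> p) * SX + be * cBx \<epsilon> p * SX^2"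
    by (rule C2)
  finally show ?thesis .
qed


lemma w_l: "(\<Sum>c\<in>UNIV. Hc \<epsilon> p c (Inl i) * pd c (\<lambda>q. cf q / crho \<epsilon> q) p) = - cA \<epsilon> p * p $ Inl i"
proof -
  have "(\<Sum>c\<in>UNIV. Hc \<epsilon> p c (Inl i) * pd c (\<lambda>q. cf q / crho \<epsilon> q) p) = (\<Sum>i'\<in>UNIV. (- dl i' i) * (cA \<epsilon> p * p $ Inl i'))"
    by (simp only: sum_UNIV_plus Hc_def sum.case pd_phi[OF p] mult_zero_left sum.neutral_const add_0_right)
  also have "\<dots> = - cA \<epsilon> p * p $ Inl i" by (rule wt)
  finally show ?thesis .
qed

lemma w_r: "(\<Sum>c\<in>UNIV. Hc \<epsilon> p c (Inr l) * pd c (\<lambda>q. cf q / crho \<epsilon> q) p) = cB \<epsilon> p * (al + be * SX) * p $ Inr l"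
proof -
  have "(\<Sum>c\<in>UNIV. Hc \<epsilon> p c (Inr l) * pd c (\<lambda>q. cf q / crho \<epsilon> q) p)
     = (\<Sum>j\<in>UNIV. (al * dl j l + be * (p $ Inr j * p $ Inr l)) * (cB \<epsilon> p * p $ Inr j))"
    by (simp only: sum_UNIV_plus Hc_def sum.case pd_phi[OF p] mult_zero_left sum.neutral_const add_0_left)
  also have "\<dots> = cB \<epsilon> p * (al + be * SX) * p $ Inr l" by (rule C1)
  finally show ?thesis .
qed

lemma Y_l: "(\<Sum>a\<in>UNIV. \<Sum>b\<in>UNIV. Hc \<epsilon> p a b * dGc \<epsilon> p a (Inl i) b) = 0"
  by (simp only: dGc_def sum.case mult_zero_right sum.neutral_const)

lemma Y_r: "(\<Sum>a\<in>UNIV. \<Sum>b\<in>UNIV. Hc \<epsilon> p a b * dGc \<epsilon> p a (Inr l) b)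
   = (al * (ckx \<epsilon> p + K2 * SX + (real CARD('n) + 1) * K3) + be * (ckx \<epsilon> p * SX + K2 * SX^2 + 2 * K3 * SX)) * p $ Inr l"
proof -
  have "(\<Sum>a\<in>UNIV. \<Sum>b\<in>UNIV. Hc \<epsilon> p a b * dGc \<epsilon> p a (Inr l) b)
    = (\<Sum>s\<in>UNIV. \<Sum>j\<in>UNIV. (al * dl s j + be * (p $ Inr s * p $ Inr j)) *
      (ckx \<epsilon> p * p $ Inr s * dl l j + K2 * p $ Inr s * (p $ Inr l * p $ Inr j) + K3 * (dl s l * p $ Inr j + dl s j * p $ Inr l)))"
    by (simp only: sum_UNIV_plus sum.distrib Hc_def dGc_def sum.case mult_zero_left mult_zero_right sum.neutral_const
        add_0_right add_0_left)
  also have "\<dots> = (al * (ckx \<epsilon> p + K2 * SX + (real CARD('n) + 1) * K3) + be * (ckx \<epsilon> p * SX + K2 * SX^2 + 2 * K3 * SX)) * p $ Inr l"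
    by (rule C3)
  finally show ?thesis .
qed

lemma Z_l: "(\<Sum>a\<in>UNIV. \<Sum>b\<in>UNIV. Hc \<epsilon> p a b * dGc \<epsilon> p (Inl i) a b)
   = real CARD('n) * al * (ckt \<epsilon> p * p $ Inl i) + (al * ((- ckt \<epsilon> p / (cr p)^2) * p $ Inl i) + be * (ckt \<epsilon> p * p $ Inl i)) * SX
     + be * ((- ckt \<epsilon> p / (cr p)^2) * p $ Inl i) * SX^2"
proof -
  have "(\<Sum>a\<in>UNIV. \<Sum>b\<in>UNIV. Hc \<epsilon> p a b * dGc \<epsilon> p (Inl i) a b)
    = (\<Sum>j\<in>UNIV. \<Sum>l\<in>UNIV. (al * dl j l + be * (p $ Inr j * p $ Inr l)) *
      ((ckt \<epsilon> p * p $ Inl i) * dl j l + ((- ckt \<epsilon> p / (cr p)^2) * p $ Inl i) * (p $ Inr j * p $ Inr l)))"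
    by (simp only: sum_UNIV_plus sum.distrib Hc_def dGc_def sum.case mult_zero_left mult_zero_right sum.neutral_const
        add_0_right add_0_left)
  also have "\<dots> = real CARD('n) * al * (ckt \<epsilon> p * p $ Inl i) + (al * ((- ckt \<epsilon> p / (cr p)^2) * p $ Inl i) + be * (ckt \<epsilon> p * p $ Inl i)) * SX
     + be * ((- ckt \<epsilon> p / (cr p)^2) * p $ Inl i) * SX^2"
    by (rule C2)
  finally show ?thesis .
qed

lemma Z_r: "(\<Sum>a\<in>UNIV. \<Sum>b\<in>UNIV. Hc \<epsilon> p a b * dGc \<epsilon> p (Inr s) a b)
   = (al * (real CARD('n) * ckx \<epsilon> p + K2 * SX + 2 * K3) + be * (ckx \<epsilon> p * SX + K2 * SX^2 + 2 * K3 * SX)) * p $ Inr s"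
proof -
  have "(\<Sum>a\<in>UNIV. \<Sum>b\<in>UNIV. Hc \<epsilon> p a b * dGc \<epsilon> p (Inr s) a b)
    = (\<Sum>j\<in>UNIV. \<Sum>l\<in>UNIV. (al * dl j l + be * (p $ Inr j * p $ Inr l)) *
      (ckx \<epsilon> p * p $ Inr s * dl j l + K2 * p $ Inr s * (p $ Inr j * p $ Inr l) + K3 * (dl s j * p $ Inr l + dl s l * p $ Inr j)))"
    by (simp only: sum_UNIV_plus sum.distrib Hc_def dGc_def sum.case mult_zero_left mult_zero_right sum.neutral_const
        add_0_right add_0_left)
  also have "\<dots> = (al * (real CARD('n) * ckx \<epsilon> p + K2 * SX + 2 * K3) + be * (ckx \<epsilon> p * SX + K2 * SX^2 + 2 * K3 * SX)) * p $ Inr s"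
    by (rule C4)
  finally show ?thesis .
qed


lemma FS: "(\<Sum>d\<in>UNIV. (\<Sum>c\<in>UNIV. Hc \<epsilon> p c d * pd c (\<lambda>q. cf q / crho \<epsilon> q) p) *
       (2 * (\<Sum>a\<in>UNIV. \<Sum>b\<in>UNIV. Hc \<epsilon> p a b * dGc \<epsilon> p a d b) - (\<Sum>a\<in>UNIV. \<Sum>b\<in>UNIV. Hc \<epsilon> p a b * dGc \<epsilon> p d a b)))
  = cA \<epsilon> p * (real CARD('n) * al * ckt \<epsilon> p + (al * (- ckt \<epsilon> p / (cr p)^2) + be * ckt \<epsilon> p) * SX + be * (- ckt \<epsilon> p / (cr p)^2) * SX^2) * ST
    + cB \<epsilon> p * (al + be * SX) * (2 * (al * (ckx \<epsilon> p + K2 * SX + (real CARD('n) + 1) * K3) + be * (ckx \<epsilon> p * SX + K2 * SX^2 + 2 * K3 * SX))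
       - (al * (real CARD('n) * ckx \<epsilon> p + K2 * SX + 2 * K3) + be * (ckx \<epsilon> p * SX + K2 * SX^2 + 2 * K3 * SX))) * SX"
  (is "?L = cA \<epsilon> p * ?cZt * ST + cB \<epsilon> p * ?w * (2 * ?cY - ?cZ) * SX")
proof -
  have "?L = (\<Sum>i\<in>UNIV. (- cA \<epsilon> p * p $ Inl i) * (2 * 0 - (real CARD('n) * al * (ckt \<epsilon> p * p $ Inl i) + (al * ((- ckt \<epsilon> p / (cr p)^2) * p $ Inl i) + be * (ckt \<epsilon> p * p $ Inl i)) * SX
     + be * ((- ckt \<epsilon> p / (cr p)^2) * p $ Inl i) * SX^2)))
     + (\<Sum>l\<in>UNIV. (cB \<epsilon> p * ?w * p $ Inr l) * (2 * (?cY * p $ Inr l) - ?cZ * p $ Inr l))"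
    by (rule trans[OF sum_UNIV_plus], simp only: w_l w_r Y_l Y_r Z_l Z_r)
  also have "(\<Sum>i\<in>UNIV. (- cA \<epsilon> p * p $ Inl i) * (2 * 0 - (real CARD('n) * al * (ckt \<epsilon> p * p $ Inl i) + (al * ((- ckt \<epsilon> p / (cr p)^2) * p $ Inl i) + be * (ckt \<epsilon> p * p $ Inl i)) * SX
     + be * ((- ckt \<epsilon> p / (cr p)^2) * p $ Inl i) * SX^2)))
     = (\<Sum>i\<in>UNIV. (cA \<epsilon> p * ?cZt) * (p $ Inl i * p $ Inl i))"
    by (rule sum.cong[OF refl], rule fs1)
  also have "\<dots> = cA \<epsilon> p * ?cZt * ST" by (simp only: sum_distrib_left[symmetric])
  also have "(\<Sum>l\<in>UNIV. (cB \<epsilon> p * ?w * p $ Inr l) * (2 * (?cY * p $ Inr l) - ?cZ * p $ Inr l))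
     = (\<Sum>l\<in>UNIV. (cB \<epsilon> p * ?w * (2 * ?cY - ?cZ)) * (p $ Inr l * p $ Inr l))"
    by (rule sum.cong[OF refl], rule fs2)
  also have "\<dots> = cB \<epsilon> p * ?w * (2 * ?cY - ?cZ) * SX" by (simp only: sum_distrib_left[symmetric])
  finally show ?thesis .
qed

end


theorem proposition3p4:
  fixes \<epsilon> :: real and p :: "real ^ ('m::finite + 'n::finite)"
  assumes "cr p \<noteq> 0" and "ctau p \<noteq> 0" and "crho \<epsilon> p \<noteq> 0"
  shows "wave (gmat \<epsilon>) (\<lambda>q. cf q / crho \<epsilon> q) p =
    - (real CARD('n) - 3) * cf p / (crho \<epsilon> p) ^ 3
    + (real CARD('n) + real CARD('m) - 2) * cr p / (2 * (crho \<epsilon> p)\<^sup>2)"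
proof -
  have p: "p \<in> SS \<epsilon>" using assms by (simp add: SS_iff)
  have Hq: "\<And>a b. ginv (gmat \<epsilon>) p $ a $ b = Hc \<epsilon> p a b" using ginv_eq assms by blast
  let ?phi = "\<lambda>q. cf q / crho \<epsilon> q"
  let ?al = "(cr p / crho \<epsilon> p)^2"
  let ?be = "(1 - (cr p / crho \<epsilon> p)^2) / (cr p)^2"
  let ?K2 = "- ckx \<epsilon> p / (cr p)^2 - 2 * (1 - kk \<epsilon> p) / (cr p)^4"
  let ?K3 = "(1 - kk \<epsilon> p) / (cr p)^2"
  let ?n = "real CARD('n)"
  let ?m = "real CARD('m)"
  let ?r = "cr p"
  let ?t = "ctau p"
  have "wave (gmat \<epsilon>) ?phi p = (\<Sum>a\<in>UNIV. \<Sum>b\<in>UNIV. Hc \<epsilon> p a b * pd a (pd b ?phi) p) - (1/2) *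
      (\<Sum>d\<in>UNIV. (\<Sum>c\<in>UNIV. Hc \<epsilon> p c d * pd c ?phi p) *
       (2 * (\<Sum>a\<in>UNIV. \<Sum>b\<in>UNIV. Hc \<epsilon> p a b * dGc \<epsilon> p a d b) - (\<Sum>a\<in>UNIV. \<Sum>b\<in>UNIV. Hc \<epsilon> p a b * dGc \<epsilon> p d a b)))"
    apply (simp only: wave_def christ_def Hq dG_eq[OF p])
    apply (rule wave_alg)
    apply (rule Hc_sym)
    done
  also have "\<dots> = (- (?m * cA \<epsilon> p + cAt \<epsilon> p * ?t^2) + (?n * ?al * cB \<epsilon> p + (?al * cBx \<epsilon> p + ?be * cB \<epsilon> p) * ?r^2 + ?be * cBx \<epsilon> p * (?r^2)^2))
     - (1/2) * (cA \<epsilon> p * (?n * ?al * ckt \<epsilon> p + (?al * (- ckt \<epsilon> p / ?r^2) + ?be * ckt \<epsilon> p) * ?r^2 + ?be * (- ckt \<epsilon> p / ?r^2) * (?r^2)^2) * ?t^2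
       + cB \<epsilon> p * (?al + ?be * ?r^2) * (2 * (?al * (ckx \<epsilon> p + ?K2 * ?r^2 + (?n + 1) * ?K3) + ?be * (ckx \<epsilon> p * ?r^2 + ?K2 * (?r^2)^2 + 2 * ?K3 * ?r^2))
       - (?al * (?n * ckx \<epsilon> p + ?K2 * ?r^2 + 2 * ?K3) + ?be * (ckx \<epsilon> p * ?r^2 + ?K2 * (?r^2)^2 + 2 * ?K3 * ?r^2))) * ?r^2)"
    by (simp only: T1_eq[OF p] FS[OF p] xx_sum tt_sum)
  also have "\<dots> = - (?n - 3) * ((?r^2 - ?t^2) / 4) / (crho \<epsilon> p)^3 + (?n + ?m - 2) * ?r / (2 * (crho \<epsilon> p)^2)"
    by (rule final_alg[OF assms(1) assms(3) crho2]) (simp_all only: cA_def cAt_def cB_def cBx_def kk_def ckx_def ckt_def)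
  finally show ?thesis by (simp only: cf_eq)
qed

end
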